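(* Let $(R_1,R_2,\ldots,R_h)$, $h\ge 2$, be rows whose overlap graph is the path $R_1-R_2-\cdots-R_h$ (i.e., $R_i$ and $R_j$ overlap if and only if $|i-j|=1$). For $1\le i\le h-1$ let $\mathcal A_i=\{R_i\setminus R_{i+1},\ R_i\cap R_{i+1},\ R_{i+1}\setminus R_i\}$ and $\mathcal A=\bigcup_{i=1}^{h-1}\mathcal A_i$. Let $C\subseteq \bigcup_{i=1}^h R_i$ be a set of columns. Then the overlap graph of the family $(R_1\cap C,\ldots,R_h\cap C)$ is connected if and only if every member of $\mathcal A$ contains an element of $C$.
   Context: Each row is identified with the set of columns in which it has a 1. Two rows (sets) overlap if their intersection is nonempty and neither is a subset of the other; the overlap graph of an indexed family of rows has one vertex per index and joins two indices when the corresponding rows overlap. *)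

theory Defs
  imports Main
begin

definition overlap :: "'a set \<Rightarrow> 'a set \<Rightarrow> bool" where
  "overlap A B \<longleftrightarrow> A \<inter> B \<noteq> {} \<and> \<not> A \<subseteq> B \<and> \<not> B \<subseteq> A"

definition overlap_edges :: "'i set \<Rightarrow> ('i \<Rightarrow> 'a set) \<Rightarrow> ('i \<times> 'i) set" where
  "overlap_edges I R = {(i, j). i \<in> I \<and> j \<in> I \<and> overlap (R i) (R j)}"

definition overlap_graph_connected :: "'i set \<Rightarrow> ('i \<Rightarrow> 'a set) \<Rightarrow> bool" where
  "overlap_graph_connected I R \<longleftrightarrow> (\<forall>i\<in>I. \<forall>j\<in>I. (i, j) \<in> (overlap_edges I R)\<^sup>*)"

end

theory Submission
  imports Defs
begin

lemma ov_restr: "overlap (A \<inter> C) (B \<inter> C) \<Longrightarrow> overlap A B"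
  unfolding overlap_def by blast

lemma ov_parts: "overlap (A \<inter> C) (B \<inter> C) \<longleftrightarrow>
   ((A - B) \<inter> C \<noteq> {} \<and> (A \<inter> B) \<inter> C \<noteq> {} \<and> (B - A) \<inter> C \<noteq> {})"
  unfolding overlap_def by blast

theorem mainTheorem10:
  fixes R :: "nat \<Rightarrow> 'a set" and h :: nat and C :: "'a set"
  assumes "h \<ge> 2"
    and "\<forall>i\<in>{1..h}. \<forall>j\<in>{1..h}. overlap (R i) (R j) \<longleftrightarrow> (i = j + 1 \<or> j = i + 1)"
    and "C \<subseteq> (\<Union>i\<in>{1..h}. R i)"
  shows "overlap_graph_connected {1..h} (\<lambda>i. R i \<inter> C) \<longleftrightarrow>
    (\<forall>A \<in> (\<Union>i\<in>{1..h-1}. {R i - R (i+1), R i \<inter> R (i+1), R (i+1) - R i}). A \<inter> C \<noteq> {})"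
proof
  let ?E = "overlap_edges {1..h} (\<lambda>i. R i \<inter> C)"
  assume conn: "overlap_graph_connected {1..h} (\<lambda>i. R i \<inter> C)"
  have "overlap (R i \<inter> C) (R (i+1) \<inter> C)" if i: "i \<in> {1..h-1}" for i
  proof (rule ccontr)
    assume no: "\<not> overlap (R i \<inter> C) (R (i+1) \<inter> C)"
    have no': "\<not> overlap (R (i+1) \<inter> C) (R i \<inter> C)"
      using no unfolding overlap_def by blast
    have "(1, h) \<in> ?E\<^sup>*" using conn assms(1) unfolding overlap_graph_connected_def by auto
    moreover have "(1, x) \<in> ?E\<^sup>* \<Longrightarrow> x \<le> i" for x
    proof (induction rule: rtrancl_induct)
      case base then show ?case using i by auto
    next
      case (step y z)
      from step(2) have yz: "y \<in> {1..h}" "z \<in> {1..h}" "overlap (R y \<inter> C) (R z \<inter> C)"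
        unfolding overlap_edges_def by auto
      then have "overlap (R y) (R z)" using ov_restr by blast
      with yz assms(2) have "z = y + 1 \<or> y = z + 1" by blast
      then show ?case using step(3) yz(3) no no' by (cases "y = i") auto
    qed
    ultimately have "h \<le> i" by blast
    then show False using i assms(1) by auto
  qed
  then show "\<forall>A \<in> (\<Union>i\<in>{1..h-1}. {R i - R (i+1), R i \<inter> R (i+1), R (i+1) - R i}). A \<inter> C \<noteq> {}"
    using ov_parts by fastforce
next
  let ?E = "overlap_edges {1..h} (\<lambda>i. R i \<inter> C)"
  assume all: "\<forall>A \<in> (\<Union>i\<in>{1..h-1}. {R i - R (i+1), R i \<inter> R (i+1), R (i+1) - R i}). A \<inter> C \<noteq> {}"
  have edge: "(i, i+1) \<in> ?E \<and> (i+1, i) \<in> ?E" if "1 \<le> i" "i + 1 \<le> h" for i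
  proof -
    have "i \<in> {1..h-1}" using that by auto
    then have "(R i - R (i+1)) \<inter> C \<noteq> {} \<and> (R i \<inter> R (i+1)) \<inter> C \<noteq> {} \<and> (R (i+1) - R i) \<inter> C \<noteq> {}"
      using all by blast
    then have "overlap (R i \<inter> C) (R (i+1) \<inter> C)" unfolding ov_parts .
    then have "overlap (R (i+1) \<inter> C) (R i \<inter> C)" unfolding overlap_def by blast
    with \<open>overlap (R i \<inter> C) (R (i+1) \<inter> C)\<close> show ?thesis
      using that unfolding overlap_edges_def by auto
  qed
  have path: "1 \<le> i \<Longrightarrow> i + k \<le> h \<Longrightarrow> (i, i+k) \<in> ?E\<^sup>* \<and> (i+k, i) \<in> ?E\<^sup>*" for i k
  proof (induction k)
    case 0 then show ?case by auto
  next
    case (Suc k)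
    then have ih: "(i, i+k) \<in> ?E\<^sup>*" "(i+k, i) \<in> ?E\<^sup>*" by auto
    have e: "(i+k, i+k+1) \<in> ?E" "(i+k+1, i+k) \<in> ?E" using edge[of "i+k"] Suc.prems by auto
    show ?case using rtrancl_into_rtrancl[OF ih(1) e(1)] converse_rtrancl_into_rtrancl[OF e(2) ih(2)]
      by simp
  qed
  show "overlap_graph_connected {1..h} (\<lambda>i. R i \<inter> C)"
    unfolding overlap_graph_connected_def
  proof (intro ballI)
    fix i j assume ij: "i \<in> {1..h}" "j \<in> {1..h}"
    show "(i, j) \<in> ?E\<^sup>*"
    proof (cases "i \<le> j")
      case True then show ?thesis using path[of i "j - i"] ij by auto
    next
      case False then show ?thesis using path[of j "i - j"] ij by auto
    qed
  qed
qed

end
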